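(* Let $q$ be an odd prime power and $n\ge1$. Let $g(x)\in\mathbb{F}_{q^n}[x]$ be a polynomial such that $g(x)^q=-g(x)$ for every $x\in\mathbb{F}_{q^n}$, let $L(x)=\sum_i a_i x^{q^i}$ with all $a_i\in\mathbb{F}_q$ be a linearized polynomial over $\mathbb{F}_q$, and let $\beta\in\mathbb{F}_{q^n}$ satisfy $\beta^q=-\beta$. Then for every $\delta\in\mathbb{F}_{q^n}$, the polynomial $$f(x)=g(x^q+x+\delta)+\beta\,\mathrm{Tr}(x)+L(x)$$ permutes $\mathbb{F}_{q^n}$ if and only if $L(x)$ permutes $\mathbb{F}_{q^n}$.
   Context: $\mathrm{Tr}$ denotes the trace function from $\mathbb{F}_{q^n}$ to $\mathbb{F}_q$, $\mathrm{Tr}(x)=x+x^q+\cdots+x^{q^{n-1}}$. A polynomial permutes $\mathbb{F}_{q^n}$ if it induces a bijection of $\mathbb{F}_{q^n}$. *)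

theory Defs
  imports "HOL-Computational_Algebra.Polynomial" "HOL-Computational_Algebra.Primes"
begin

definition trace_q :: "nat \<Rightarrow> nat \<Rightarrow> 'a::field \<Rightarrow> 'a" where
  "trace_q q n x = (\<Sum>i<n. x ^ (q ^ i))"

definition linearized :: "nat \<Rightarrow> 'a list \<Rightarrow> 'a::field \<Rightarrow> 'a" where
  "linearized q a x = (\<Sum>i<length a. (a ! i) * x ^ (q ^ i))"

end

theory Submission
  imports Defs "HOL-Number_Theory.Residues"
begin

lemma ff_power_card_eq_same:
  fixes x :: "'a :: {finite,field}"
  shows   "x ^ card (UNIV :: 'a set) = x"
proof (cases "x = 0")
  case False
  have "x * (\<Prod>y\<in>UNIV-{0}. x * y) = x * x ^ (card (UNIV :: 'a set) - 1) * \<Prod>(UNIV-{0})"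
    by (simp add: prod.distrib mult_ac)
  also have "x * x ^ (card (UNIV :: 'a set) - 1) = x ^ Suc (card (UNIV :: 'a set) - 1)"
    by (subst power_Suc) auto
  also have "Suc (card (UNIV :: 'a set) - 1) = card (UNIV :: 'a set)"
    using finite_UNIV_card_ge_0[where ?'a = 'a] by simp
  also have "(\<Prod>y\<in>UNIV-{0}. x * y) = (\<Prod>y\<in>UNIV-{0}. y)"
    by (rule prod.reindex_bij_witness[of _ "\<lambda>y. y / x" "\<lambda>y. x * y"]) (use False in auto)
  finally show ?thesis
    by simp
qed (use finite_UNIV_card_ge_0[where ?'a = 'a] in auto)

lemma ff_power_card_power:
  fixes x :: "'a :: {finite,field}"
  shows "x ^ (card (UNIV :: 'a set) ^ m) = x"
  by (induction m) (simp_all add: ff_power_card_eq_same power_mult)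

lemma ff_CHAR:
  assumes "prime p" "card (UNIV :: 'a :: {finite,field} set) = p ^ m"
  shows "CHAR('a) = p"
proof -
  have pc: "prime CHAR('a)"
    using prime_CHAR_semidom[where ?'a = 'a] finite_imp_CHAR_pos[where ?'a='a] by auto
  have "CHAR('a) dvd p ^ m" using CHAR_dvd_CARD[where ?'a='a] assms(2) by simp
  hence "CHAR('a) dvd p" using pc prime_dvd_power by blast
  thus ?thesis using pc assms(1) primes_dvd_imp_eq by blast
qed

theorem mainTheorem7:
  fixes q n :: nat
    and g :: "'a::{finite,field} poly"
    and a :: "'a list"
    and \<beta> \<delta> :: 'a
  assumes "\<exists>p k. prime p \<and> k > 0 \<and> q = p ^ k"
    and "odd q"
    and "n \<ge> 1"
    and "card (UNIV :: 'a set) = q ^ n"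
    and "\<forall>x. (poly g x) ^ q = - poly g x"
    and "\<forall>i<length a. (a ! i) ^ q = a ! i"
    and "\<beta> ^ q = - \<beta>"
  shows "bij (\<lambda>x. poly g (x ^ q + x + \<delta>) + \<beta> * trace_q q n x + linearized q a x)
         \<longleftrightarrow> bij (linearized q a)"
proof -
  obtain p k where pk: "prime p" "k > 0" "q = p ^ k" using assms(1) by blast
  have card: "card (UNIV :: 'a set) = p ^ (k * n)" using assms(4) pk by (simp add: power_mult)
  have ch: "CHAR('a) = p" using ff_CHAR[OF pk(1) card] .
  have pc: "prime CHAR('a)" using ch pk by simp
  have fadd: "(x + y) ^ (q ^ i) = x ^ (q ^ i) + y ^ (q ^ i)" for x y :: 'a and i
    by (rule freshmans_dream'[OF pc, where n="k*i"]) (simp add: ch pk power_mult)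
  have fsum: "(sum h A) ^ (q ^ i) = (\<Sum>j\<in>A. h j ^ (q ^ i))" for h :: "nat \<Rightarrow> 'a" and A and i
    by (rule freshmans_dream_sum'[OF pc, where n="k*i"]) (simp add: ch pk power_mult)
  have fneg: "(- x) ^ (q ^ i) = - (x ^ (q ^ i))" for x :: 'a and i
    using assms(2) by simp
  have fid: "x ^ (q ^ n) = x" for x :: 'a
    using ff_power_card_power[of x 1] assms(4) by simp
  have fadd1: "(x + y) ^ q = x ^ q + y ^ q" for x y :: 'a using fadd[of x y 1] by simp
  have fneg1: "(- x) ^ q = - (x ^ q)" for x :: 'a using fneg[of x 1] by simp
  have qnz: "q \<noteq> 0" using assms(2) by (metis even_zero)
  define T where "T = (trace_q q n :: 'a \<Rightarrow> 'a)"
  define L where "L = (linearized q a :: 'a \<Rightarrow> 'a)"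
  define th where "th = (\<lambda>x::'a. x ^ q + x)"
  define f where "f = (\<lambda>x. poly g (x ^ q + x + \<delta>) + \<beta> * T x + L x)"
  have Tadd: "T (x + y) = T x + T y" for x y
    unfolding T_def trace_q_def by (simp add: fadd sum.distrib)
  have Tq: "T x ^ q = T x" for x
  proof -
    have "T x ^ q = (\<Sum>i<n. x ^ (q ^ Suc i))"
      unfolding T_def trace_q_def using fsum[of _ _ 1]
      by (simp add: power_mult[symmetric] mult.commute)
    also have "\<dots> = (\<Sum>i<n. x ^ (q ^ i))"
    proof -
      obtain m where m: "n = Suc m" using assms(3) by (cases n) auto
      have "(\<Sum>i<n. x ^ (q ^ Suc i)) = (\<Sum>i<m. x ^ (q ^ Suc i)) + x ^ (q ^ n)"
        by (simp add: m)
      also have "\<dots> = (\<Sum>i<m. x ^ (q ^ Suc i)) + x ^ (q ^ 0)" using fid by simp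
      also have "\<dots> = (\<Sum>i<Suc m. x ^ (q ^ i))"
        by (subst sum.lessThan_Suc_shift) simp
      finally show ?thesis by (simp add: m)
    qed
    finally show ?thesis unfolding T_def trace_q_def .
  qed
  have Ladd: "L (x + y) = L x + L y" for x y
    unfolding L_def linearized_def by (simp add: fadd sum.distrib distrib_left)
  have L0: "L 0 = 0" unfolding L_def linearized_def using qnz by (simp add: power_0_left)
  have Lneg: "L (- x) = - L x" for x
    unfolding L_def linearized_def by (simp add: fneg sum_negf)
  have Lq: "L x ^ q = L (x ^ q)" for x
  proof -
    have "L x ^ q = (\<Sum>i<length a. (a ! i * x ^ q ^ i) ^ q)"
      unfolding L_def linearized_def using fsum[of _ _ 1] by simp
    also have "\<dots> = L (x ^ q)"
      unfolding L_def linearized_def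
      by (intro sum.cong refl) (simp add: power_mult_distrib assms(6) power_mult[symmetric] mult.commute)
    finally show ?thesis .
  qed
  have thadd: "th (x + y) = th x + th y" for x y unfolding th_def by (simp add: fadd1)
  have thneg: "th (- x) = - th x" for x unfolding th_def by (simp add: fneg1)
  have th0: "th 0 = 0" unfolding th_def using qnz by (simp add: power_0_left)
  have thL: "th (L x) = L (th x)" for x unfolding th_def by (simp add: Lq Ladd)
  have thf: "th (f x) = L (th x)" for x
  proof -
    have "th (f x) = (poly g (x ^ q + x + \<delta>) ^ q + poly g (x ^ q + x + \<delta>))
        + (\<beta> ^ q * T x ^ q + \<beta> * T x) + (L x ^ q + L x)"
      unfolding th_def f_def by (simp add: fadd1 power_mult_distrib algebra_simps)
    also have "\<dots> = L (th x)" using assms(5,7) by (simp add: Tq Lq Ladd th_def)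
    finally show ?thesis .
  qed
  have Ts: "T s = 0" if s: "s ^ q = - s" for s
  proof -
    have si: "(s ^ q ^ i) ^ q = - (s ^ q ^ i)" for i
    proof -
      have "(s ^ q ^ i) ^ q = (s ^ q) ^ (q ^ i)" by (simp add: power_mult[symmetric] mult.commute)
      thus ?thesis using s fneg by simp
    qed
    have "T s ^ q = - T s"
      unfolding T_def trace_q_def using fsum[of _ _ 1] by (simp add: si sum_negf)
    hence "T s = - T s" using Tq by simp
    hence "of_nat 2 * T s = 0" by (simp add: algebra_simps)
    moreover have "of_nat 2 \<noteq> (0::'a)"
    proof
      assume "of_nat 2 = (0::'a)"
      hence "p dvd 2" using of_nat_eq_0_iff_char_dvd ch by metis
      hence "p = 2" using pk(1) using primes_dvd_imp_eq two_is_prime_nat by blast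
      thus False using assms(2) pk by simp
    qed
    ultimately show ?thesis by simp
  qed
  have fs: "f (x + s) = f x + L s" if s: "s ^ q = - s" for x s
  proof -
    have h: "(x + s) ^ q + (x + s) + \<delta> = x ^ q + x + \<delta>" using s by (simp add: fadd1)
    show ?thesis unfolding f_def h using Ts[OF s] by (simp add: Tadd Ladd algebra_simps)
  qed
  have kerth: "d ^ q = - d" if "th d = 0" for d
    using that unfolding th_def by (simp add: eq_neg_iff_add_eq_0)
  have fin: "finite (UNIV :: 'a set)" by simp
  have "bij f \<longleftrightarrow> bij L"
  proof
    assume bL: "bij L"
    have "inj f"
    proof (rule injI)
      fix x y assume e: "f x = f y"
      have "L (th x) = L (th y)" using e thf[of x] thf[of y] by simp
      hence "th x = th y" using bL by (simp add: bij_def inj_eq)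
      hence "th (x - y) = 0" using thadd[of x "- y"] thneg[of y] by simp
      hence s: "(x - y) ^ q = - (x - y)" by (rule kerth)
      have "f x = f y + L (x - y)" using fs[OF s, of y] by simp
      hence "L (x - y) = L 0" using e L0 by simp
      hence "x - y = 0" using bL by (simp add: bij_def inj_eq)
      thus "x = y" by simp
    qed
    thus "bij f" using fin finite_UNIV_inj_surj bij_def by blast
  next
    assume bf: "bij f"
    define R where "R = range th"
    have "L ` R = R"
    proof
      show "L ` R \<subseteq> R" unfolding R_def by (auto simp: thf[symmetric])
      show "R \<subseteq> L ` R"
      proof
        fix y assume "y \<in> R"
        then obtain x where y: "y = th x" unfolding R_def by blast
        obtain z where "f z = x" using bf by (metis bij_def surjD)
        hence "y = L (th z)" using y thf[of z] by simp
        thus "y \<in> L ` R" unfolding R_def by blast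
      qed
    qed
    hence iR: "inj_on L R" by (simp add: eq_card_imp_inj_on)
    have "inj L"
    proof (rule injI)
      fix z w assume e: "L z = L w"
      define d where "d = z - w"
      have Ld: "L d = 0" unfolding d_def using e Ladd[of z "- w"] Lneg[of w] by simp
      have "L (th d) = L (th 0)" using thL[of d] Ld th0 L0 by simp
      hence "th d = th 0" using iR unfolding R_def by (meson inj_onD rangeI)
      hence s: "d ^ q = - d" using th0 kerth by simp
      have "f (0 + d) = f 0" using fs[OF s, of 0] Ld by simp
      hence "d = 0" using bf by (metis add_0 bij_def inj_eq)
      thus "z = w" unfolding d_def by simp
    qed
    thus "bij L" using fin finite_UNIV_inj_surj bij_def by blast
  qed
  thus ?thesis unfolding f_def L_def T_def .
qed

end
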